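(* (Quantitative subject reduction.) If $\Gamma\vdash^{n_1} t_1:\sigma$ is derivable in $\cap J$ and $t_1\to_{d\beta}t_2$ is a non-erasing step, then $\Gamma\vdash^{n_2}t_2:\sigma$ is derivable in $\cap J$ for some $n_2<n_1$.
   Context: Terms $\mathtt T_J$: $t,u,r ::= x \mid \lambda x.t \mid t(u,y.r)$ ($y$ bound in $r$), up to $\alpha$-equivalence; $\{u/x\}t$ capture-avoiding substitution. List contexts $\mathtt D ::= \Diamond \mid t(u,y.\mathtt D)$. Distant beta: $\mathtt D\langle\lambda x.t\rangle(u,y.r) \mapsto_{d\beta} \{\{u/x\}\mathtt D\langle t\rangle/y\}r$ (variables bound by $\mathtt D$ not free in $u$, $x$ not in $\mathtt D$), $\to_{d\beta}$ its closure under all contexts. A step is non-erasing if the contracted redex $\mathtt D\langle\lambda x.t\rangle(u,y.r)$ satisfies $x\in\mathrm{fv}(t)$ and $y\in\mathrm{fv}(r)$. System $\cap J$: types $\sigma,\tau ::= \alpha \mid \mathcal M\to\sigma$, $\mathcal M=[\sigma_i]_{i\in I}$ a finite possibly empty multiset; $\sqcup$ multiset union; environments map variables to multisets, $\wedge$ pointwise union, $\Gamma;x:\mathcal M$ extension with $x\notin\mathrm{dom}\,\Gamma$. $\mathrm{ch}(\mathcal M)=\mathcal M$ if $\mathcal M\ne[\,]$, $\mathrm{ch}([\,])=[\tau]$ for an arbitrary $\tau$. Rules: (var) $x:[\sigma]\vdash x:\sigma$; (abs) from $\Gamma;x:\mathcal M\vdash t:\sigma$ infer $\Gamma\vdash\lambda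 x.t:\mathcal M\to\sigma$; (many) from $(\Gamma_i\vdash t:\sigma_i)_{i\in I}$, $I\ne\emptyset$, infer $\wedge_i\Gamma_i\vdash t:[\sigma_i]_{i\in I}$; (app) from $\Gamma\vdash t:\mathrm{ch}([\mathcal M_i\to\tau_i]_{i\in I})$, $\Delta\vdash u:\mathrm{ch}(\sqcup_i\mathcal M_i)$, $\Lambda;y:[\tau_i]_{i\in I}\vdash r:\sigma$ infer $\Gamma\wedge\Delta\wedge\Lambda\vdash t(u,y.r):\sigma$. $\vdash^n$ indicates a derivation of size $n$ = number of rule instances other than (many). *)

theory Defs
  imports Main "HOL-Library.Multiset"
begin

text \<open>Terms up to alpha-equivalence are represented with de Bruijn indices.
  \<open>Lam t\<close> binds index 0 in t; \<open>App t u r\<close> represents t(u, y.r), where y is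
  bound (as index 0) in r only.\<close>

datatype trm = Var nat | Lam trm | App trm trm trm

fun shift :: "nat \<Rightarrow> nat \<Rightarrow> trm \<Rightarrow> trm" where
  "shift d c (Var i) = Var (if i < c then i else i + d)"
| "shift d c (Lam t) = Lam (shift d (Suc c) t)"
| "shift d c (App t u r) = App (shift d c t) (shift d c u) (shift d (Suc c) r)"

fun subst :: "trm \<Rightarrow> nat \<Rightarrow> trm \<Rightarrow> trm" where
  "subst (Var i) k s = (if i < k then Var i else if i = k then s else Var (i - 1))"
| "subst (Lam t) k s = Lam (subst t (Suc k) (shift 1 0 s))"
| "subst (App t u r) k s = App (subst t k s) (subst u k s) (subst r (Suc k) (shift 1 0 s))"

fun loose :: "nat \<Rightarrow> trm \<Rightarrow> bool" where
  "loose k (Var i) = (i = k)"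
| "loose k (Lam t) = loose (Suc k) t"
| "loose k (App t u r) = (loose k t \<or> loose k u \<or> loose (Suc k) r)"

text \<open>List contexts D ::= Hole | t(u, y.D).\<close>
datatype lctx = Hole | DApp trm trm lctx

fun plug :: "lctx \<Rightarrow> trm \<Rightarrow> trm" where
  "plug Hole s = s"
| "plug (DApp t u D) s = App t u (plug D s)"

fun depth :: "lctx \<Rightarrow> nat" where
  "depth Hole = 0"
| "depth (DApp t u D) = Suc (depth D)"

text \<open>Root: D<lam x.t>(u, y.r) -> {{u/x}D<t>/y}r with x free in t and y free in r.
  In de Bruijn form u must be shifted past the depth(D) binders of D.\<close>
inductive ne_step :: "trm \<Rightarrow> trm \<Rightarrow> bool" where
  root: "loose 0 t \<Longrightarrow> loose 0 r \<Longrightarrow>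
     ne_step (App (plug D (Lam t)) u r)
             (subst r 0 (plug D (subst t 0 (shift (depth D) 0 u))))"
| lam: "ne_step t t' \<Longrightarrow> ne_step (Lam t) (Lam t')"
| app1: "ne_step t t' \<Longrightarrow> ne_step (App t u r) (App t' u r)"
| app2: "ne_step u u' \<Longrightarrow> ne_step (App t u r) (App t u' r)"
| app3: "ne_step r r' \<Longrightarrow> ne_step (App t u r) (App t u r')"

datatype ty = TAtom nat | Arr "ty multiset" ty

type_synonym env = "nat \<Rightarrow> ty multiset"

definition env_union :: "env \<Rightarrow> env \<Rightarrow> env" (infixl "\<and>\<^sub>e" 70) where
  "env_union G D = (\<lambda>i. G i + D i)"

definition env_sum :: "env list \<Rightarrow> env" where
  "env_sum Gs = (\<lambda>i. sum_list (map (\<lambda>G. G i) Gs))"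

definition env_cons :: "ty multiset \<Rightarrow> env \<Rightarrow> env" where
  "env_cons M G = (\<lambda>i. case i of 0 \<Rightarrow> M | Suc j \<Rightarrow> G j)"

definition env_single :: "nat \<Rightarrow> ty \<Rightarrow> env" where
  "env_single x s = (\<lambda>i. if i = x then {#s#} else {#})"

text \<open>\<open>ch M M'\<close>: M' is a possible value of ch(M).\<close>
definition ch :: "ty multiset \<Rightarrow> ty multiset \<Rightarrow> bool" where
  "ch M M' \<longleftrightarrow> (M \<noteq> {#} \<and> M' = M) \<or> (M = {#} \<and> (\<exists>\<tau>. M' = {#\<tau>#}))"

text \<open>\<open>has_ty G t s n\<close>: G |-^n t : s; \<open>has_mty G t M n\<close>: G |-^n t : M (via many).
  Sizes count all rule instances except (many).\<close>
inductive has_ty :: "env \<Rightarrow> trm \<Rightarrow> ty \<Rightarrow> nat \<Rightarrow> bool"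
  and has_mty :: "env \<Rightarrow> trm \<Rightarrow> ty multiset \<Rightarrow> nat \<Rightarrow> bool" where
  var: "has_ty (env_single x s) (Var x) s 1"
| abs: "has_ty (env_cons M G) t s n \<Longrightarrow> has_ty G (Lam t) (Arr M s) (Suc n)"
| many: "xs \<noteq> [] \<Longrightarrow> (\<forall>i<length xs. has_ty (fst (xs ! i)) t (fst (snd (xs ! i))) (snd (snd (xs ! i))))
     \<Longrightarrow> has_mty (env_sum (map fst xs)) t (mset (map (\<lambda>x. fst (snd x)) xs))
              (sum_list (map (\<lambda>x. snd (snd x)) xs))"
| app: "ch (mset (map (\<lambda>p. Arr (fst p) (snd p)) ps)) A \<Longrightarrow> has_mty G t A n1 \<Longrightarrow>
        ch (sum_list (map fst ps)) B \<Longrightarrow> has_mty D u B n2 \<Longrightarrow>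
        has_ty (env_cons (mset (map snd ps)) L) r s n3 \<Longrightarrow>
        has_ty (G \<and>\<^sub>e D \<and>\<^sub>e L) (App t u r) s (Suc (n1 + n2 + n3))"

end

theory Submission
  imports Defs
begin

definition env0 :: env where "env0 = (\<lambda>_. {#})"
definition env_del :: "nat \<Rightarrow> env \<Rightarrow> env" where
  "env_del k G = (\<lambda>i. if i < k then G i else G (Suc i))"
definition env_shift :: "nat \<Rightarrow> nat \<Rightarrow> env \<Rightarrow> env" where
  "env_shift d c G = (\<lambda>i. if i < c then G i else if i < c + d then {#} else G (i - d))"

lemma eu_app: "(G \<and>\<^sub>e D) i = G i + D i" by (simp add: env_union_def)
lemma env0_app: "env0 i = {#}" by (simp add: env0_def)
lemma ec_0[simp]: "env_cons M G 0 = M" by (simp add: env_cons_def)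
lemma ec_Suc[simp]: "env_cons M G (Suc j) = G j" by (simp add: env_cons_def)

lemma env_ac: "(G \<and>\<^sub>e D) \<and>\<^sub>e L = G \<and>\<^sub>e (D \<and>\<^sub>e L)" "G \<and>\<^sub>e D = D \<and>\<^sub>e G"
  "G \<and>\<^sub>e (D \<and>\<^sub>e L) = D \<and>\<^sub>e (G \<and>\<^sub>e L)"
  by (auto simp: fun_eq_iff eu_app env0_app add_ac)

lemma env0_union[simp]: "env0 \<and>\<^sub>e G = G" "G \<and>\<^sub>e env0 = G" by (auto simp: fun_eq_iff eu_app env0_app)

lemma env_cons_union: "env_cons M G \<and>\<^sub>e env_cons N D = env_cons (M + N) (G \<and>\<^sub>e D)"
  by (auto simp: fun_eq_iff eu_app env0_app env_cons_def split: nat.split)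

lemma env_shift_single: "env_shift d c (env_single x s) = env_single (if x < c then x else x + d) s"
  by (auto simp: fun_eq_iff eu_app env0_app env_shift_def env_single_def)
lemma env_shift_cons: "env_shift d (Suc c) (env_cons M G) = env_cons M (env_shift d c G)"
  proof (rule ext)
  fix i show "env_shift d (Suc c) (env_cons M G) i = env_cons M (env_shift d c G) i"
    by (cases i) (auto simp: env_shift_def env_cons_def Suc_diff_le)
qed
lemma env_shift_union: "env_shift d c (G \<and>\<^sub>e D) = env_shift d c G \<and>\<^sub>e env_shift d c D"
  by (auto simp: fun_eq_iff eu_app env0_app env_shift_def)
lemma env_shift_0: "env_shift d c env0 = env0"
  by (auto simp: fun_eq_iff eu_app env0_app env_shift_def)
lemma env_shift_1: "env_shift 1 0 G = env_cons {#} G"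
  by (auto simp: fun_eq_iff eu_app env0_app env_shift_def env_cons_def split: nat.split)

lemma env_del_single: "env_del k (env_single x s) =
   (if x = k then env0 else env_single (if x < k then x else x - 1) s)"
  by (auto simp: fun_eq_iff eu_app env0_app env_del_def env_single_def)
lemma env_del_cons: "env_del (Suc k) (env_cons M G) = env_cons M (env_del k G)"
  by (auto simp: fun_eq_iff eu_app env0_app env_del_def env_cons_def split: nat.split)
lemma env_del_cons0: "env_del 0 (env_cons M G) = G"
  by (auto simp: fun_eq_iff eu_app env0_app env_del_def env_cons_def)
lemma env_del_union: "env_del k (G \<and>\<^sub>e D) = env_del k G \<and>\<^sub>e env_del k D"
  by (auto simp: fun_eq_iff eu_app env0_app env_del_def)
lemma env_del_0: "env_del k env0 = env0"
  by (auto simp: fun_eq_iff eu_app env0_app env_del_def)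

lemma env_sum_nil: "env_sum [] = env0" by (simp add: env_sum_def env0_def)
lemma env_sum_cons: "env_sum (G # Gs) = G \<and>\<^sub>e env_sum Gs"
  by (simp add: env_sum_def env_union_def)

lemma shift_shift: "shift a c (shift b c u) = shift (a + b) c u"
  by (induction u arbitrary: c) auto
lemma shift0: "shift 0 c u = u"
  by (induction u arbitrary: c) auto

lemma ch_ne: "ch X A \<Longrightarrow> A \<noteq> {#}" by (auto simp: ch_def)
lemma ch_eq: "ch X A \<Longrightarrow> X \<noteq> {#} \<Longrightarrow> A = X" by (auto simp: ch_def)

inductive ty2 :: "env \<Rightarrow> trm \<Rightarrow> ty \<Rightarrow> nat \<Rightarrow> bool"
  and mty2 :: "env \<Rightarrow> trm \<Rightarrow> ty multiset \<Rightarrow> nat \<Rightarrow> bool" where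
  tvar: "ty2 (env_single x s) (Var x) s 1"
| tabs: "ty2 (env_cons M G) t s n \<Longrightarrow> ty2 G (Lam t) (Arr M s) (Suc n)"
| tapp: "ch (mset (map (\<lambda>p. Arr (fst p) (snd p)) ps)) A \<Longrightarrow> mty2 G t A n1 \<Longrightarrow>
        ch (sum_list (map fst ps)) B \<Longrightarrow> mty2 D u B n2 \<Longrightarrow>
        ty2 (env_cons (mset (map snd ps)) L) r s n3 \<Longrightarrow>
        ty2 (G \<and>\<^sub>e D \<and>\<^sub>e L) (App t u r) s (Suc (n1 + n2 + n3))"
| mnil: "mty2 env0 t {#} 0"
| mcons: "ty2 G t s n \<Longrightarrow> mty2 D t A m \<Longrightarrow> mty2 (G \<and>\<^sub>e D) t (add_mset s A) (n + m)"

lemma mty2_empty: "mty2 D t {#} m \<Longrightarrow> D = env0 \<and> m = 0"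
  by (cases rule: mty2.cases) auto

lemma mty2_add_inv: "mty2 D t A m \<Longrightarrow> s \<in># A \<Longrightarrow>
  \<exists>G1 D2 n1 m2. ty2 G1 t s n1 \<and> mty2 D2 t (A - {#s#}) m2 \<and> D = G1 \<and>\<^sub>e D2 \<and> m = n1 + m2"
proof (induction "size A" arbitrary: A D m rule: less_induct)
  case less
  from less.prems(1) show ?case
  proof (cases rule: mty2.cases)
    case mnil then show ?thesis using less.prems by simp
  next
    case (mcons G s' n D' A' m')
    show ?thesis
    proof (cases "s' = s")
      case True then show ?thesis using mcons by auto
    next
      case False
      then have "s \<in># A'" using mcons less.prems by auto
      then obtain G1 D2 n1 m2 where h: "ty2 G1 t s n1" "mty2 D2 t (A' - {#s#}) m2"
         "D' = G1 \<and>\<^sub>e D2" "m' = n1 + m2"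
        using less.hyps[of A' D' m'] mcons by auto
      have "mty2 (G \<and>\<^sub>e D2) t (add_mset s' (A' - {#s#})) (n + m2)"
        using h mcons by (auto intro: ty2_mty2.mcons)
      moreover have "add_mset s' (A' - {#s#}) = A - {#s#}" using mcons \<open>s \<in># A'\<close> False by auto
      ultimately have "ty2 G1 t s n1 \<and> mty2 (G \<and>\<^sub>e D2) t (A - {#s#}) (n + m2) \<and>
         D = G1 \<and>\<^sub>e (G \<and>\<^sub>e D2) \<and> m = n1 + (n + m2)" using h mcons by (auto simp: env_ac)
      then show ?thesis by blast
    qed
  qed
qed

lemma mty2_split: "mty2 D t (A + B) m \<Longrightarrow>
  \<exists>D1 D2 m1 m2. mty2 D1 t A m1 \<and> mty2 D2 t B m2 \<and> D = D1 \<and>\<^sub>e D2 \<and> m = m1 + m2"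
proof (induction A arbitrary: D m)
  case empty then show ?case using ty2_mty2.mnil by fastforce
next
  case (add x A)
  from mty2_add_inv[OF add.prems, of x] obtain G1 D2 n1 m2 where
    h: "ty2 G1 t x n1" "mty2 D2 t (A + B) m2" "D = G1 \<and>\<^sub>e D2" "m = n1 + m2" by auto
  from add.IH[OF h(2)] obtain E1 E2 k1 k2 where
    "mty2 E1 t A k1" "mty2 E2 t B k2" "D2 = E1 \<and>\<^sub>e E2" "m2 = k1 + k2" by auto
  moreover have "mty2 (G1 \<and>\<^sub>e E1) t (add_mset x A) (n1 + k1)"
    using h(1) \<open>mty2 E1 t A k1\<close> by (rule ty2_mty2.mcons)
  moreover have "D = (G1 \<and>\<^sub>e E1) \<and>\<^sub>e E2" "m = (n1 + k1) + k2"
    using h \<open>D2 = E1 \<and>\<^sub>e E2\<close> \<open>m2 = k1 + k2\<close> by (simp_all add: env_ac)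
  ultimately show ?case by blast
qed

lemma mty2_join: shows "ty2 G t s n \<Longrightarrow> True"
  and "mty2 D1 t A m1 \<Longrightarrow> mty2 D2 t B m2 \<Longrightarrow> mty2 (D1 \<and>\<^sub>e D2) t (A + B) (m1 + m2)"
proof (induction rule: ty2_mty2.inducts)
  case (mcons G t s n D A m)
  then show ?case using ty2_mty2.mcons[OF mcons(1) mcons(4)[OF mcons(5)]]
    by (simp add: env_ac add.assoc)
qed auto

lemma ty2_mty2_single: "ty2 G t s n \<Longrightarrow> mty2 G t {#s#} n"
  using mcons[OF _ mnil] by fastforce

lemma mty2_single: "mty2 D t {#s#} m \<Longrightarrow> ty2 D t s m"
  using mty2_add_inv[of D t "{#s#}" m s] mty2_empty by fastforce

lemma ty2_shift: shows "ty2 G t s n \<Longrightarrow> ty2 (env_shift d c G) (shift d c t) s n"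
  and "mty2 G t A n \<Longrightarrow> mty2 (env_shift d c G) (shift d c t) A n"
proof (induction arbitrary: c and c rule: ty2_mty2.inducts)
  case (tvar x s)
  then show ?case using ty2_mty2.tvar by (auto simp: env_shift_single)
next
  case (tabs M G t s n)
  then show ?case using tabs.IH[of "Suc c"] by (auto simp: env_shift_cons intro: ty2_mty2.tabs)
next
  case (tapp ps A G t n1 B D u n2 L r s n3)
  show ?case using tapp.IH(3)[of "Suc c"] tapp.IH(1,2)[of c] tapp.hyps
    by (auto simp: env_shift_cons env_shift_union intro: ty2_mty2.tapp)
next
  case (mnil t) then show ?case by (metis env_shift_0 ty2_mty2.mnil)
next
  case mcons then show ?case by (auto simp: env_shift_union intro: ty2_mty2.mcons)
qed

lemma mty2_shift1: "mty2 G t A n \<Longrightarrow> mty2 (env_cons {#} G) (shift 1 0 t) A n"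
  using ty2_shift(2)[of G t A n 1 0] by (simp add: env_shift_1[simplified])

lemma relevance: shows "ty2 G t s n \<Longrightarrow> loose k t \<Longrightarrow> G k \<noteq> {#}"
  and "mty2 G t A n \<Longrightarrow> A \<noteq> {#} \<Longrightarrow> loose k t \<Longrightarrow> G k \<noteq> {#}"
proof (induction arbitrary: k and k rule: ty2_mty2.inducts)
  case (tvar x s) then show ?case by (simp add: env_single_def)
next
  case (tabs M G t s n) then show ?case using tabs.IH[of "Suc k"] by simp
next
  case (tapp ps A G t n1 B D u n2 L r s n3)
  have "A \<noteq> {#}" "B \<noteq> {#}" using tapp.hyps(1,3) ch_ne by auto
  then have "G k \<noteq> {#} \<or> D k \<noteq> {#} \<or> L k \<noteq> {#}"
    using tapp.prems tapp.IH(1)[of k] tapp.IH(2)[of k] tapp.IH(3)[of "Suc k"] by auto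
  then show ?case by (auto simp: eu_app)
next
  case (mnil t) then show ?case by simp
next
  case (mcons G t s n D A m)
  then show ?case by (auto simp: eu_app)
qed

lemma ty2_pos: shows "ty2 G t s n \<Longrightarrow> 1 \<le> n" and "mty2 D t A m \<Longrightarrow> size A \<le> m"
  by (induction rule: ty2_mty2.inducts) auto


lemma subst_lemma:
  shows "ty2 G t s n \<Longrightarrow> mty2 E v (G k) mm \<Longrightarrow>
    \<exists>n'. ty2 (env_del k G \<and>\<^sub>e E) (subst t k v) s n' \<and> n' + size (G k) = n + mm"
  and "mty2 G t A n \<Longrightarrow> mty2 E v (G k) mm \<Longrightarrow>
    \<exists>n'. mty2 (env_del k G \<and>\<^sub>e E) (subst t k v) A n' \<and> n' + size (G k) = n + mm"
proof (induction arbitrary: k E v mm and k E v mm rule: ty2_mty2.inducts)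
  case (tvar x s)
  show ?case
  proof (cases "x = k")
    case True
    then have "ty2 E v s mm" using tvar mty2_single by (simp add: env_single_def)
    moreover have "env_del k (env_single x s) = env0" using True by (simp add: env_del_single)
    ultimately show ?thesis using True by (simp add: env_single_def)
  next
    case False
    then have "E = env0" "mm = 0" using tvar mty2_empty by (auto simp: env_single_def)
    moreover have "ty2 (env_single (if x < k then x else x - 1) s) (Var (if x < k then x else x - 1)) s 1"
      by (rule ty2_mty2.tvar)
    moreover have "env_del k (env_single x s) = env_single (if x < k then x else x - 1) s"
      using False by (simp add: env_del_single)
    moreover have "subst (Var x) k v = Var (if x < k then x else x - 1)" using False by simp
    ultimately have "ty2 (env_del k (env_single x s) \<and>\<^sub>e E) (subst (Var x) k v) s 1"
      using ty2_mty2.tvar by simp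
    moreover have "size (env_single x s k) = 0" using False by (simp add: env_single_def)
    ultimately show ?thesis using \<open>mm = 0\<close> by (intro exI[of _ 1]) simp
  qed
next
  case (tabs M G t s n)
  have "mty2 (env_cons {#} E) (shift 1 0 v) (env_cons M G (Suc k)) mm"
    using mty2_shift1[OF tabs.prems] by simp
  from tabs.IH[OF this] obtain n' where
    "ty2 (env_del (Suc k) (env_cons M G) \<and>\<^sub>e env_cons {#} E) (subst t (Suc k) (shift 1 0 v)) s n'"
    "n' + size (G k) = n + mm" by auto
  then have "ty2 (env_cons M (env_del k G \<and>\<^sub>e E)) (subst t (Suc k) (shift 1 0 v)) s n'"
    "n' + size (G k) = n + mm"
    by (simp_all add: env_del_cons env_cons_union)
  then show ?case by (auto intro: ty2_mty2.tabs)
next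
  case (tapp ps A G t n1 B D u n2 L r s n3)
  have "mty2 E v ((G k + D k) + L k) mm" using tapp.prems by (simp add: eu_app)
  from mty2_split[OF this] obtain E12 E3 m12 m3 where
    a: "mty2 E12 v (G k + D k) m12" "mty2 E3 v (L k) m3" "E = E12 \<and>\<^sub>e E3" "mm = m12 + m3"
    by blast
  from mty2_split[OF a(1)] obtain E1 E2 m1 m2 where
    b: "mty2 E1 v (G k) m1" "mty2 E2 v (D k) m2" "E12 = E1 \<and>\<^sub>e E2" "m12 = m1 + m2"
    by blast
  from tapp.IH(1)[OF b(1)] obtain a1 where
    c1: "mty2 (env_del k G \<and>\<^sub>e E1) (subst t k v) A a1" "a1 + size (G k) = n1 + m1" by blast
  from tapp.IH(2)[OF b(2)] obtain a2 where
    c2: "mty2 (env_del k D \<and>\<^sub>e E2) (subst u k v) B a2" "a2 + size (D k) = n2 + m2" by blast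
  have "mty2 (env_cons {#} E3) (shift 1 0 v) (env_cons (mset (map snd ps)) L (Suc k)) m3"
    using mty2_shift1[OF a(2)] by simp
  from tapp.IH(3)[OF this] obtain a3 where
    "ty2 (env_del (Suc k) (env_cons (mset (map snd ps)) L) \<and>\<^sub>e env_cons {#} E3)
       (subst r (Suc k) (shift 1 0 v)) s a3" "a3 + size (L k) = n3 + m3" by auto
  then have c3: "ty2 (env_cons (mset (map snd ps)) (env_del k L \<and>\<^sub>e E3))
       (subst r (Suc k) (shift 1 0 v)) s a3" "a3 + size (L k) = n3 + m3"
    by (simp_all add: env_del_cons env_cons_union)
  have "ty2 ((env_del k G \<and>\<^sub>e E1) \<and>\<^sub>e (env_del k D \<and>\<^sub>e E2) \<and>\<^sub>e (env_del k L \<and>\<^sub>e E3))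
     (App (subst t k v) (subst u k v) (subst r (Suc k) (shift 1 0 v))) s (Suc (a1 + a2 + a3))"
    by (rule ty2_mty2.tapp[OF tapp.hyps(1) c1(1) tapp.hyps(3) c2(1) c3(1)])
  moreover have "(env_del k G \<and>\<^sub>e E1) \<and>\<^sub>e (env_del k D \<and>\<^sub>e E2) \<and>\<^sub>e (env_del k L \<and>\<^sub>e E3)
      = env_del k (G \<and>\<^sub>e D \<and>\<^sub>e L) \<and>\<^sub>e E"
    using a(3) b(3) by (simp add: env_del_union env_ac)
  moreover have "Suc (a1 + a2 + a3) + size ((G \<and>\<^sub>e D \<and>\<^sub>e L) k) = Suc (n1 + n2 + n3) + mm"
    using a(4) b(4) c1(2) c2(2) c3(2) by (simp add: eu_app)
  ultimately show ?case by auto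
next
  case (mnil t)
  then have "E = env0" "mm = 0" using mty2_empty by (auto simp: env0_app)
  moreover have "size (env0 k) = 0" by (simp add: env0_app)
  ultimately show ?case using ty2_mty2.mnil by (simp add: env_del_0)
next
  case (mcons G t s n D A m)
  have "mty2 E v (G k + D k) mm" using mcons.prems by (simp add: eu_app)
  from mty2_split[OF this] obtain E1 E2 m1 m2 where
    b: "mty2 E1 v (G k) m1" "mty2 E2 v (D k) m2" "E = E1 \<and>\<^sub>e E2" "mm = m1 + m2"
    by blast
  from mcons.IH(1)[OF b(1)] obtain a1 where
    c1: "ty2 (env_del k G \<and>\<^sub>e E1) (subst t k v) s a1" "a1 + size (G k) = n + m1" by blast
  from mcons.IH(2)[OF b(2)] obtain a2 where
    c2: "mty2 (env_del k D \<and>\<^sub>e E2) (subst t k v) A a2" "a2 + size (D k) = m + m2" by blast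
  have "mty2 ((env_del k G \<and>\<^sub>e E1) \<and>\<^sub>e (env_del k D \<and>\<^sub>e E2)) (subst t k v) (add_mset s A) (a1 + a2)"
    by (rule ty2_mty2.mcons[OF c1(1) c2(1)])
  moreover have "(env_del k G \<and>\<^sub>e E1) \<and>\<^sub>e (env_del k D \<and>\<^sub>e E2) = env_del k (G \<and>\<^sub>e D) \<and>\<^sub>e E"
    using b(3) by (simp add: env_del_union env_ac)
  moreover have "a1 + a2 + size ((G \<and>\<^sub>e D) k) = n + m + mm"
    using b(4) c1(2) c2(2) by (simp add: eu_app)
  ultimately show ?case by auto
qed

lemma plug_lemma: "ty2 G (plug D (Lam t)) (Arr M \<tau>) n \<Longrightarrow> mty2 E v M m \<Longrightarrow>
  \<exists>n'. ty2 (G \<and>\<^sub>e E) (plug D (subst t 0 (shift (depth D) 0 v))) \<tau> n' \<and> n' + 1 + size M \<le> n + m"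
proof (induction D arbitrary: G E v n m)
  case Hole
  from Hole.prems(1) obtain n0 where h: "n = Suc n0" "ty2 (env_cons M G) t \<tau> n0"
    by (cases rule: ty2.cases) auto
  have "mty2 E v (env_cons M G 0) m" using Hole.prems(2) by simp
  from subst_lemma(1)[OF h(2) this] obtain n' where
    "ty2 (env_del 0 (env_cons M G) \<and>\<^sub>e E) (subst t 0 v) \<tau> n'" "n' + size M = n0 + m" by auto
  then show ?case using h by (auto simp: env_del_cons0 shift0)
next
  case (DApp t1 u1 D)
  from DApp.prems(1) obtain ps A G1 n1 B G2 n2 L n3 where h:
    "ch (mset (map (\<lambda>p. Arr (fst p) (snd p)) ps)) A" "mty2 G1 t1 A n1"
    "ch (sum_list (map fst ps)) B" "mty2 G2 u1 B n2"
    "ty2 (env_cons (mset (map snd ps)) L) (plug D (Lam t)) (Arr M \<tau>) n3"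
    "G = G1 \<and>\<^sub>e G2 \<and>\<^sub>e L" "n = Suc (n1 + n2 + n3)"
    by (cases rule: ty2.cases) auto
  from DApp.IH[OF h(5) mty2_shift1[OF DApp.prems(2)]] obtain n' where
    "ty2 (env_cons (mset (map snd ps)) L \<and>\<^sub>e env_cons {#} E)
       (plug D (subst t 0 (shift (depth D) 0 (shift 1 0 v)))) \<tau> n'" "n' + 1 + size M \<le> n3 + m"
    by auto
  then have i: "ty2 (env_cons (mset (map snd ps)) (L \<and>\<^sub>e E))
       (plug D (subst t 0 (shift (Suc (depth D)) 0 v))) \<tau> n'" "n' + 1 + size M \<le> n3 + m"
    by (simp_all add: env_cons_union shift_shift)
  have "ty2 (G1 \<and>\<^sub>e G2 \<and>\<^sub>e (L \<and>\<^sub>e E)) (App t1 u1 (plug D (subst t 0 (shift (Suc (depth D)) 0 v)))) \<tau>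
     (Suc (n1 + n2 + n'))"
    by (rule ty2_mty2.tapp[OF h(1-4) i(1)])
  moreover have "G1 \<and>\<^sub>e G2 \<and>\<^sub>e (L \<and>\<^sub>e E) = G \<and>\<^sub>e E" using h(6) by (simp add: env_ac)
  ultimately show ?case using h(7) i(2) by auto
qed

lemma plug_rel: "ty2 G (plug D (Lam t)) (Arr M \<tau>) n \<Longrightarrow> loose 0 t \<Longrightarrow> M \<noteq> {#}"
proof (induction D arbitrary: G n)
  case Hole
  from Hole.prems(1) obtain n0 where h: "ty2 (env_cons M G) t \<tau> n0"
    by (cases rule: ty2.cases) auto
  from relevance(1)[OF h Hole.prems(2)] show ?case by simp
next
  case (DApp t1 u1 D)
  from DApp.prems(1) obtain L Y n3 where
    "ty2 (env_cons Y L) (plug D (Lam t)) (Arr M \<tau>) n3"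
    by (cases rule: ty2.cases) auto
  then show ?case using DApp by blast
qed

lemma ps_lemma: "mty2 G (plug D (Lam t)) (mset (map (\<lambda>p. Arr (fst p) (snd p)) ps)) n \<Longrightarrow>
  mty2 E v (sum_list (map fst ps)) m \<Longrightarrow>
  \<exists>n'. mty2 (G \<and>\<^sub>e E) (plug D (subst t 0 (shift (depth D) 0 v))) (mset (map snd ps)) n' \<and>
     n' + length ps \<le> n + m"
proof (induction ps arbitrary: G E n m)
  case Nil
  then have "G = env0" "E = env0" "n = 0" "m = 0" using mty2_empty by auto
  then show ?case using ty2_mty2.mnil by auto
next
  case (Cons p ps)
  obtain M \<tau> where p: "p = (M, \<tau>)" by (cases p)
  from mty2_add_inv[OF Cons.prems(1), of "Arr M \<tau>"] obtain G1 G2 n1 n2 where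
    a: "ty2 G1 (plug D (Lam t)) (Arr M \<tau>) n1"
      "mty2 G2 (plug D (Lam t)) (mset (map (\<lambda>p. Arr (fst p) (snd p)) ps)) n2"
      "G = G1 \<and>\<^sub>e G2" "n = n1 + n2" using p by auto
  from mty2_split[of E v M "sum_list (map fst ps)" m] Cons.prems(2) p obtain E1 E2 m1 m2 where
    b: "mty2 E1 v M m1" "mty2 E2 v (sum_list (map fst ps)) m2" "E = E1 \<and>\<^sub>e E2" "m = m1 + m2"
    by auto
  from plug_lemma[OF a(1) b(1)] obtain k1 where
    c1: "ty2 (G1 \<and>\<^sub>e E1) (plug D (subst t 0 (shift (depth D) 0 v))) \<tau> k1" "k1 + 1 + size M \<le> n1 + m1"
    by auto
  from Cons.IH[OF a(2) b(2)] obtain k2 where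
    c2: "mty2 (G2 \<and>\<^sub>e E2) (plug D (subst t 0 (shift (depth D) 0 v))) (mset (map snd ps)) k2"
      "k2 + length ps \<le> n2 + m2" by auto
  have "mty2 ((G1 \<and>\<^sub>e E1) \<and>\<^sub>e (G2 \<and>\<^sub>e E2)) (plug D (subst t 0 (shift (depth D) 0 v)))
     (add_mset \<tau> (mset (map snd ps))) (k1 + k2)"
    by (rule ty2_mty2.mcons[OF c1(1) c2(1)])
  moreover have "(G1 \<and>\<^sub>e E1) \<and>\<^sub>e (G2 \<and>\<^sub>e E2) = G \<and>\<^sub>e E" using a b by (simp add: env_ac)
  ultimately show ?case using a b c1 c2 p by auto
qed

lemma mty2_mem: "mty2 G t A n \<Longrightarrow> s \<in># A \<Longrightarrow> \<exists>G' n'. ty2 G' t s n'"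
  using mty2_add_inv by blast

lemma sum_list_ne: "ps \<noteq> [] \<Longrightarrow> \<forall>p\<in>set ps. fst p \<noteq> {#} \<Longrightarrow> sum_list (map fst ps) \<noteq> ({#} :: ty multiset)"
  by (induction ps) auto

lemma mty2_step: shows "ty2 G t s n \<Longrightarrow> True"
  and "mty2 G t A n \<Longrightarrow> (\<And>G s n. ty2 G t s n \<Longrightarrow> \<exists>n'<n. ty2 G t' s n') \<Longrightarrow>
    \<exists>n'\<le>n. mty2 G t' A n' \<and> (A \<noteq> {#} \<longrightarrow> n' < n)"
proof (induction rule: ty2_mty2.inducts)
  case (mnil t) then show ?case using ty2_mty2.mnil by blast
next
  case (mcons G t s n D A m)
  from mcons.prems[OF mcons.hyps(1)] obtain a where a: "a < n" "ty2 G t' s a" by blast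
  from mcons.IH(2)[OF mcons.prems] obtain b where b: "b \<le> m" "mty2 D t' A b" by blast
  have "mty2 (G \<and>\<^sub>e D) t' (add_mset s A) (a + b)" by (rule ty2_mty2.mcons[OF a(2) b(2)])
  then show ?case using a b by (intro exI[of _ "a + b"]) auto
qed auto

lemma sr: "ne_step t1 t2 \<Longrightarrow> ty2 G t1 s n \<Longrightarrow> \<exists>n'<n. ty2 G t2 s n'"
proof (induction arbitrary: G s n rule: ne_step.induct)
  case (root t r D u)
  from root.prems obtain ps A G1 n1 B G2 n2 L n3 where h:
    "ch (mset (map (\<lambda>p. Arr (fst p) (snd p)) ps)) A" "mty2 G1 (plug D (Lam t)) A n1"
    "ch (sum_list (map fst ps)) B" "mty2 G2 u B n2"
    "ty2 (env_cons (mset (map snd ps)) L) r s n3"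
    "G = G1 \<and>\<^sub>e G2 \<and>\<^sub>e L" "n = Suc (n1 + n2 + n3)"
    by (cases rule: ty2.cases) auto
  from relevance(1)[OF h(5) root.hyps(2)] have "ps \<noteq> []" by auto
  then have hA: "A = mset (map (\<lambda>p. Arr (fst p) (snd p)) ps)" using ch_eq[OF h(1)] by auto
  have "\<forall>p\<in>set ps. fst p \<noteq> {#}"
  proof
    fix p assume "p \<in> set ps"
    then have "Arr (fst p) (snd p) \<in># A" using hA by auto
    from mty2_mem[OF h(2) this] obtain G' n' where "ty2 G' (plug D (Lam t)) (Arr (fst p) (snd p)) n'"
      by blast
    from plug_rel[OF this root.hyps(1)] show "fst p \<noteq> {#}" .
  qed
  then have hB: "B = sum_list (map fst ps)" using ch_eq[OF h(3)] sum_list_ne[OF \<open>ps \<noteq> []\<close>] by auto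
  from ps_lemma[of G1 D t ps n1 G2 u n2] h(2,4) hA hB obtain k where
    k: "mty2 (G1 \<and>\<^sub>e G2) (plug D (subst t 0 (shift (depth D) 0 u))) (mset (map snd ps)) k"
       "k + length ps \<le> n1 + n2" by auto
  have "mty2 (G1 \<and>\<^sub>e G2) (plug D (subst t 0 (shift (depth D) 0 u))) (env_cons (mset (map snd ps)) L 0) k"
    using k(1) by simp
  from subst_lemma(1)[OF h(5) this] obtain k' where
    "ty2 (env_del 0 (env_cons (mset (map snd ps)) L) \<and>\<^sub>e (G1 \<and>\<^sub>e G2))
      (subst r 0 (plug D (subst t 0 (shift (depth D) 0 u)))) s k'"
    "k' + size (mset (map snd ps)) = n3 + k" by auto
  moreover have "env_del 0 (env_cons (mset (map snd ps)) L) \<and>\<^sub>e (G1 \<and>\<^sub>e G2) = G"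
    using h(6) by (simp add: env_del_cons0 env_ac)
  ultimately show ?case using k(2) h(7) by (intro exI[of _ k']) auto
next
  case (lam t t')
  from lam.prems obtain M s0 n0 where h: "s = Arr M s0" "n = Suc n0" "ty2 (env_cons M G) t s0 n0"
    by (cases rule: ty2.cases) auto
  from lam.IH[OF h(3)] obtain a where "a < n0" "ty2 (env_cons M G) t' s0 a" by blast
  then show ?case using h by (auto intro: ty2_mty2.tabs)
next
  case (app1 t t' u r)
  from app1.prems obtain ps A G1 n1 B G2 n2 L n3 where h:
    "ch (mset (map (\<lambda>p. Arr (fst p) (snd p)) ps)) A" "mty2 G1 t A n1"
    "ch (sum_list (map fst ps)) B" "mty2 G2 u B n2"
    "ty2 (env_cons (mset (map snd ps)) L) r s n3"
    "G = G1 \<and>\<^sub>e G2 \<and>\<^sub>e L" "n = Suc (n1 + n2 + n3)"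
    by (cases rule: ty2.cases) auto
  from mty2_step(2)[OF h(2) app1.IH] ch_ne[OF h(1)] obtain a where
    "a < n1" "mty2 G1 t' A a" by blast
  then show ?case using h ty2_mty2.tapp[OF h(1) \<open>mty2 G1 t' A a\<close> h(3,4,5)]
    by (intro exI[of _ "Suc (a + n2 + n3)"]) auto
next
  case (app2 u u' t r)
  from app2.prems obtain ps A G1 n1 B G2 n2 L n3 where h:
    "ch (mset (map (\<lambda>p. Arr (fst p) (snd p)) ps)) A" "mty2 G1 t A n1"
    "ch (sum_list (map fst ps)) B" "mty2 G2 u B n2"
    "ty2 (env_cons (mset (map snd ps)) L) r s n3"
    "G = G1 \<and>\<^sub>e G2 \<and>\<^sub>e L" "n = Suc (n1 + n2 + n3)"
    by (cases rule: ty2.cases) auto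
  from mty2_step(2)[OF h(4) app2.IH] ch_ne[OF h(3)] obtain a where
    "a < n2" "mty2 G2 u' B a" by blast
  then show ?case using h ty2_mty2.tapp[OF h(1,2,3) \<open>mty2 G2 u' B a\<close> h(5)]
    by (intro exI[of _ "Suc (n1 + a + n3)"]) auto
next
  case (app3 r r' t u)
  from app3.prems obtain ps A G1 n1 B G2 n2 L n3 where h:
    "ch (mset (map (\<lambda>p. Arr (fst p) (snd p)) ps)) A" "mty2 G1 t A n1"
    "ch (sum_list (map fst ps)) B" "mty2 G2 u B n2"
    "ty2 (env_cons (mset (map snd ps)) L) r s n3"
    "G = G1 \<and>\<^sub>e G2 \<and>\<^sub>e L" "n = Suc (n1 + n2 + n3)"
    by (cases rule: ty2.cases) auto
  from app3.IH[OF h(5)] obtain a where "a < n3" "ty2 (env_cons (mset (map snd ps)) L) r' s a" by blast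
  then show ?case using h ty2_mty2.tapp[OF h(1-4) \<open>ty2 _ r' s a\<close>]
    by (intro exI[of _ "Suc (n1 + n2 + a)"]) auto
qed


lemma list_mty2: "(\<forall>i<length xs. ty2 (fst (xs ! i)) t (fst (snd (xs ! i))) (snd (snd (xs ! i)))) \<Longrightarrow>
  mty2 (env_sum (map fst xs)) t (mset (map (\<lambda>x. fst (snd x)) xs)) (sum_list (map (\<lambda>x. snd (snd x)) xs))"
proof (induction xs)
  case Nil then show ?case by (simp add: env_sum_nil ty2_mty2.mnil)
next
  case (Cons x xs)
  have "ty2 (fst x) t (fst (snd x)) (snd (snd x))" using Cons.prems by force
  moreover have "mty2 (env_sum (map fst xs)) t (mset (map (\<lambda>x. fst (snd x)) xs)) (sum_list (map (\<lambda>x. snd (snd x)) xs))"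
    using Cons by force
  ultimately show ?case by (simp add: env_sum_cons ty2_mty2.mcons)
qed

lemma to_ty2: shows "has_ty G t s n \<Longrightarrow> ty2 G t s n" and "has_mty G t A n \<Longrightarrow> mty2 G t A n"
proof (induction rule: has_ty_has_mty.inducts)
  case (var x s) then show ?case by (rule ty2_mty2.tvar)
next
  case (abs M G t s n) then show ?case by (blast intro: ty2_mty2.tabs)
next
  case (many xs t) then show ?case using list_mty2[of xs t] by blast
next
  case (app ps A G t n1 B D u n2 L r s n3) then show ?case by (blast intro: ty2_mty2.tapp)
qed

lemma from_ty2: shows "ty2 G t s n \<Longrightarrow> has_ty G t s n" and "mty2 G t A n \<Longrightarrow> A \<noteq> {#} \<Longrightarrow> has_mty G t A n"
proof (induction rule: ty2_mty2.inducts)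
  case (tvar x s) then show ?case by (rule has_ty_has_mty.var)
next
  case (tabs M G t s n) then show ?case by (blast intro: has_ty_has_mty.abs)
next
  case (tapp ps A G t n1 B D u n2 L r s n3) then show ?case
    using ch_ne by (blast intro: has_ty_has_mty.app)
next
  case (mnil t) then show ?case by simp
next
  case (mcons G t s n D A m)
  show ?case
  proof (cases "A = {#}")
    case True
    then have "D = env0" "m = 0" using mcons.hyps(2) mty2_empty by auto
    moreover have "has_mty (env_sum (map fst [(G, s, n)])) t (mset (map (\<lambda>x. fst (snd x)) [(G, s, n)]))
       (sum_list (map (\<lambda>x. snd (snd x)) [(G, s, n)]))"
      by (rule has_ty_has_mty.many) (use mcons.IH(1) in auto)
    ultimately show ?thesis using True by (simp add: env_sum_cons env_sum_nil)
  next
    case False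
    from mcons.IH(2)[OF False] show ?thesis
    proof (cases rule: has_mty.cases)
      case (many xs)
      have "has_mty (env_sum (map fst ((G, s, n) # xs))) t (mset (map (\<lambda>x. fst (snd x)) ((G, s, n) # xs)))
       (sum_list (map (\<lambda>x. snd (snd x)) ((G, s, n) # xs)))"
      proof (rule has_ty_has_mty.many)
        show "\<forall>i<length ((G, s, n) # xs). has_ty (fst (((G, s, n) # xs) ! i)) t
           (fst (snd (((G, s, n) # xs) ! i))) (snd (snd (((G, s, n) # xs) ! i)))"
          using many mcons.IH(1) by (auto simp: nth_Cons split: nat.split)
      qed simp
      then show ?thesis using many by (simp add: env_sum_cons)
    qed
  qed
qed

theorem mainTheorem8:
  assumes "has_ty \<Gamma> t1 \<sigma> n1"
    and "ne_step t1 t2"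
  shows "\<exists>n2 < n1. has_ty \<Gamma> t2 \<sigma> n2"
  using sr[OF assms(2) to_ty2(1)[OF assms(1)]] from_ty2(1) by blast

end
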